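(* Let $R$ be a ring with identity and involution $*$. The following conditions are equivalent: (1) $R$ is directly finite, i.e. for all $a,b\in R$, $ab=1$ implies $ba=1$; (2) for all $a,b\in R$: $aba=a$, $(ab)^*=ab$ and $ab^2=b$ hold if and only if $a$ is core invertible with $a^{\oplus}=b$.
   Context: An involution on $R$ satisfies $(a^* )^*=a$, $(ab)^*=b^*a^*$, $(a+b)^*=a^*+b^*$. An element $x\in R$ is a core inverse of $a$ if $axa=a$, $xR=aR$ and $Rx=Ra^*$; it is unique when it exists and is denoted $a^{\oplus}$. *)

theory Defs
  imports Main
begin

definition involution :: "('a::ring_1 \<Rightarrow> 'a) \<Rightarrow> bool" where
  "involution star \<longleftrightarrow>
     (\<forall>a. star (star a) = a) \<and>
     (\<forall>a b. star (a * b) = star b * star a) \<and>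
     (\<forall>a b. star (a + b) = star a + star b)"

definition right_ideal :: "'a::ring_1 \<Rightarrow> 'a set" where
  "right_ideal x = {x * r | r. True}"

definition left_ideal :: "'a::ring_1 \<Rightarrow> 'a set" where
  "left_ideal x = {r * x | r. True}"

definition core_inverse :: "('a::ring_1 \<Rightarrow> 'a) \<Rightarrow> 'a \<Rightarrow> 'a \<Rightarrow> bool" where
  "core_inverse star a x \<longleftrightarrow>
     a * x * a = a \<and> right_ideal x = right_ideal a \<and> left_ideal x = left_ideal (star a)"

definition directly_finite :: "'a::ring_1 itself \<Rightarrow> bool" where
  "directly_finite _ \<longleftrightarrow> (\<forall>a b :: 'a. a * b = 1 \<longrightarrow> b * a = 1)"

end

theory Submission
  imports Defs
begin

lemma inv_star1:
  assumes "involution star" shows "star (1::'a::ring_1) = 1"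
proof -
  have ss: "\<And>x. star (star x) = x" and sm: "\<And>x y. star (x*y) = star y * star x"
    using assms unfolding involution_def by auto
  have "star (star (1::'a)) = star (1 * star 1)" by simp
  also have "\<dots> = star (star 1) * star 1" by (rule sm)
  finally show ?thesis using ss by simp
qed

lemma core_to_cond:
  fixes a b :: "'a::ring_1"
  assumes inv: "involution star" and c: "core_inverse star a b"
  shows "a * b * a = a \<and> star (a * b) = a * b \<and> a * b ^ 2 = b"
proof -
  have ss: "\<And>x. star (star x) = x" and sm: "\<And>x y. star (x*y) = star y * star x"
    using inv unfolding involution_def by auto
  have h1: "a*b*a = a" and r: "right_ideal b = right_ideal a"
    and l: "left_ideal b = left_ideal (star a)" using c unfolding core_inverse_def by auto
  have "b \<in> right_ideal b" unfolding right_ideal_def by (rule CollectI, rule exI[of _ 1]) simp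
  then obtain t where t: "b = a*t" using r unfolding right_ideal_def by auto
  have "b \<in> left_ideal b" unfolding left_ideal_def by (rule CollectI, rule exI[of _ 1]) simp
  then obtain s where s: "b = s * star a" using l unfolding left_ideal_def by auto
  have sa: "star a = star a * star (a*b)" using sm[of "a*b" a] h1 by simp
  have bb: "b = b * star (a*b)" using s sa by (metis mult.assoc)
  have "star (a*b) = star (a * b * star (a*b))" using bb by (metis mult.assoc)
  also have "\<dots> = a*b * star(a*b)" using sm ss by simp
  also have "\<dots> = a*b" using bb by (metis mult.assoc)
  finally have h2: "star (a*b) = a*b" .
  have h3: "a * b^2 = b" using t h1 by (simp add: power2_eq_square) (metis mult.assoc)
  show ?thesis using h1 h2 h3 by simp
qed

lemma cond_to_core:
  fixes a b :: "'a::ring_1"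
  assumes inv: "involution star" and df: "directly_finite TYPE('a)"
    and h1: "a * b * a = a" and h2: "star (a * b) = a * b" and h3: "a * b ^ 2 = b"
  shows "core_inverse star a b"
proof -
  have ss: "\<And>x. star (star x) = x" and sm: "\<And>x y. star (x*y) = star y * star x"
    using inv unfolding involution_def by auto
  have r1: "a*(b*a) = a" using h1 by (simp add: mult.assoc)
  have r1': "\<And>z. a*(b*(a*z)) = a*z" using r1 by (metis mult.assoc)
  have r2: "a*(b*b) = b" using h3 by (simp add: power2_eq_square)
  have r2': "\<And>z. a*(b*(b*z)) = b*z" using r2 by (metis mult.assoc)
  define u where "u = a*(a*b) + 1 - a*b"
  define v where "v = b*(a*b) + 1 - a*b"
  have uv: "u * v = 1" unfolding u_def v_def
    by (simp add: algebra_simps r1 r1' r2 r2')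
  have vu: "v * u = 1" using df uv unfolding directly_finite_def by blast
  have "v * u = b*(a*(a*b)) + 1 - a*b" unfolding u_def v_def
    by (simp add: algebra_simps r1 r1' r2 r2')
  then have k: "b*(a*(a*b)) = a*b" using vu by (simp add: algebra_simps)
  have "b*(a*a) = b*(a*(a*b*a))" using h1 by simp
  also have "\<dots> = b*(a*(a*b))*a" by (simp add: mult.assoc)
  also have "\<dots> = a" using k h1 by simp
  finally have ba2: "b*(a*a) = a" .
  have bab: "b*a*b = b"
  proof -
    have "b*a*b = b*a*(a*(b*b))" using r2 by simp
    also have "\<dots> = b*(a*a)*(b*b)" by (simp add: mult.assoc)
    also have "\<dots> = b" using ba2 r2 by simp
    finally show ?thesis .
  qed
  have sa: "star a = star a * (a*b)" using sm[of "a*b" a] h1 h2 by simp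
  have bs: "b = b * star b * star a" using bab h2 sm[of a b] by (metis mult.assoc)
  have R: "right_ideal b = right_ideal a"
    unfolding right_ideal_def
  proof (intro set_eqI iffI)
    fix x assume "x \<in> {b * r |r. True}"
    then obtain r where "x = b*r" by auto
    then have "x = a*(b*b*r)" using r2' by (simp add: mult.assoc)
    then show "x \<in> {a * r |r. True}" by auto
  next
    fix x assume "x \<in> {a * r |r. True}"
    then obtain r where "x = a*r" by auto
    then have "x = b*(a*a*r)" using ba2 by (metis mult.assoc)
    then show "x \<in> {b * r |r. True}" by auto
  qed
  have L: "left_ideal b = left_ideal (star a)"
    unfolding left_ideal_def
  proof (intro set_eqI iffI)
    fix x assume "x \<in> {r * b |r. True}"
    then obtain r where "x = r*b" by auto
    then have "x = (r*b*star b) * star a" using bs by (metis mult.assoc)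
    then show "x \<in> {r * star a |r. True}" by auto
  next
    fix x assume "x \<in> {r * star a |r. True}"
    then obtain r where "x = r * star a" by auto
    then have "x = (r*star a*a)*b" using sa by (metis mult.assoc)
    then show "x \<in> {r * b |r. True}" by auto
  qed
  show ?thesis unfolding core_inverse_def using h1 R L by simp
qed

theorem theorem3p9:
  fixes star :: "'a::ring_1 \<Rightarrow> 'a"
  assumes "involution star"
  shows "directly_finite TYPE('a) \<longleftrightarrow>
    (\<forall>a b :: 'a. (a * b * a = a \<and> star (a * b) = a * b \<and> a * b ^ 2 = b)
                  \<longleftrightarrow> core_inverse star a b)"
proof
  assume df: "directly_finite TYPE('a)"
  show "\<forall>a b :: 'a. (a * b * a = a \<and> star (a * b) = a * b \<and> a * b ^ 2 = b)
                  \<longleftrightarrow> core_inverse star a b"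
    using cond_to_core[OF assms df] core_to_cond[OF assms] by blast
next
  assume H: "\<forall>a b :: 'a. (a * b * a = a \<and> star (a * b) = a * b \<and> a * b ^ 2 = b)
                  \<longleftrightarrow> core_inverse star a b"
  show "directly_finite TYPE('a)" unfolding directly_finite_def
  proof (intro allI impI)
    fix x y :: 'a assume xy: "x * y = 1"
    have "x*y*x = x \<and> star (x*y) = x*y \<and> x*y^2 = y"
      using xy inv_star1[OF assms] by (simp add: power2_eq_square mult.assoc[symmetric])
    then have "core_inverse star x y" using H by blast
    then have r: "right_ideal y = right_ideal x" unfolding core_inverse_def by simp
    have "x \<in> right_ideal x" unfolding right_ideal_def by (rule CollectI, rule exI[of _ 1]) simp
    then obtain t where t: "x = y*t" using r unfolding right_ideal_def by auto
    have yty: "y*(t*y) = 1" using xy t by (simp add: mult.assoc)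
    have "x = x*(y*(t*y))" using yty by simp
    also have "\<dots> = t*y" using xy by (metis mult.assoc mult_1_left)
    finally show "y * x = 1" using yty by simp
  qed
qed

end
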